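(* Let $t$ be real with $1\leq t\leq n$. If $S(t)>0$, then $\alpha(G)\leq\lfloor t\rfloor$.
   Context: Let $G$ be a simple graph with vertex set $V=\{1,\dots,n\}$, edge set $E$, adjacency matrix $A$ and stability number $\alpha(G)$ (maximum size of a set of pairwise nonadjacent vertices). Let $e$ be the all-ones vector, $\langle M,N\rangle=\operatorname{trace}(M^TN)$, and $X\geq 0$ mean entrywise nonnegativity. For real $t$ with $1\leq t\leq n$, $Q(t)$ is the semidefinite program $$\min \tfrac12\langle A,X\rangle\ \text{ s.t. } X\succeq 0,\ X\geq 0,\ \operatorname{trace}(X)=t,\ Xe=t\operatorname{diag}(X)$$ over symmetric $n\times n$ matrices $X$, and $S(t)$ denotes its optimal value. *)

theory Defs
  imports "HOL-Analysis.Analysis"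
begin

text \<open>Simple graph on a finite vertex type 'n (n = CARD('n)), given by an
edge relation E which is symmetric and irreflexive.\<close>
definition simple_graph :: "('n::finite \<Rightarrow> 'n \<Rightarrow> bool) \<Rightarrow> bool" where
  "simple_graph E \<longleftrightarrow> (\<forall>i j. E i j \<longleftrightarrow> E j i) \<and> (\<forall>i. \<not> E i i)"

definition adj_matrix :: "('n::finite \<Rightarrow> 'n \<Rightarrow> bool) \<Rightarrow> real^'n^'n" where
  "adj_matrix E = (\<chi> i j. if E i j then 1 else 0)"

definition stable_set :: "('n::finite \<Rightarrow> 'n \<Rightarrow> bool) \<Rightarrow> 'n set \<Rightarrow> bool" where
  "stable_set E S \<longleftrightarrow> (\<forall>i\<in>S. \<forall>j\<in>S. \<not> E i j)"

definition stability_number :: "('n::finite \<Rightarrow> 'n \<Rightarrow> bool) \<Rightarrow> nat" where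
  "stability_number E = Max (card ` {S. stable_set E S})"

definition frob :: "real^'n^'n \<Rightarrow> real^'n^'n \<Rightarrow> real" where
  "frob M N = trace (transpose M ** N)"

definition psd :: "real^'n^'n \<Rightarrow> bool" where
  "psd X \<longleftrightarrow> transpose X = X \<and> (\<forall>x. 0 \<le> x \<bullet> (X *v x))"

definition diag_vec :: "real^'n^'n \<Rightarrow> real^'n" where
  "diag_vec X = (\<chi> i. X $ i $ i)"

definition Q_feasible :: "real \<Rightarrow> (real^'n::finite^'n) set" where
  "Q_feasible t = {X. transpose X = X \<and> psd X \<and> (\<forall>i j. 0 \<le> X $ i $ j)
      \<and> trace X = t \<and> X *v (\<chi> i. 1) = t *\<^sub>R diag_vec X}"

definition S_val :: "('n::finite \<Rightarrow> 'n \<Rightarrow> bool) \<Rightarrow> real \<Rightarrow> real" where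
  "S_val E t = Inf ((\<lambda>X. frob (adj_matrix E) X / 2) ` Q_feasible t)"

end

theory Submission
  imports Defs
begin

lemma frob_nonneg:
  assumes "\<forall>i j. 0 \<le> X $ i $ j"
  shows "0 \<le> frob (adj_matrix E) X"
  unfolding frob_def trace_def matrix_matrix_mult_def adj_matrix_def transpose_def
  using assms by (auto intro!: sum_nonneg)

lemma mainTheorem14_aux:
  fixes E :: "'n::finite \<Rightarrow> 'n \<Rightarrow> bool" and t :: real
  assumes "1 \<le> t" and st: "stable_set E S" and k2: "2 \<le> card S" and kt: "t \<le> real (card S)"
  shows "S_val E t \<le> 0"
proof -
  define k where "k = real (card S)"
  have k1: "k - 1 > 0" using k2 unfolding k_def by simp
  have kpos: "k > 0" using k1 by simp
  define b where "b = t * (t - 1) / (k * (k - 1))"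
  define a where "a = t * (k - t) / (k * (k - 1))"
  have a0: "a \<ge> 0" unfolding a_def using assms kt k1 kpos unfolding k_def by (auto intro!: divide_nonneg_pos)
  have b0: "b \<ge> 0" unfolding b_def using assms k1 kpos by (auto intro!: divide_nonneg_pos)
  have ab: "a + b = t / k"
  proof -
    have "a + b = (t * (k - t) + t * (t - 1)) / (k * (k - 1))"
      unfolding a_def b_def by (simp add: add_divide_distrib)
    also have "t * (k - t) + t * (t - 1) = t * (k - 1)" by (simp add: algebra_simps)
    finally show ?thesis using k1 kpos by simp
  qed
  have abk: "a + b * k = t * (a + b)"
  proof -
    have "a + b * k = (t * (k - t) + t * (t - 1) * k) / (k * (k - 1))"
      unfolding a_def b_def by (simp add: add_divide_distrib)
    also have "t * (k - t) + t * (t - 1) * k = (t * t / k) * (k * (k - 1))" using kpos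
      by (simp add: field_simps)
    finally show ?thesis using k1 kpos ab by (simp add: power2_eq_square)
  qed
  define X :: "real^'n^'n" where "X = (\<chi> i j. if i \<in> S \<and> j \<in> S then (if i = j then a else 0) + b else 0)"
  have Xij: "X $ i $ j = (if i \<in> S \<and> j \<in> S then (if i = j then a else 0) + b else 0)" for i j
    unfolding X_def by simp
  have Xv: "(X *v x) $ i = (if i \<in> S then a * x $ i + b * sum (\<lambda>j. x $ j) S else 0)" for x i
  proof (cases "i \<in> S")
    case True
    have "(X *v x) $ i = (\<Sum>j\<in>UNIV. (if j \<in> S then ((if i = j then a else 0) + b) * x $ j else 0))"
      unfolding matrix_vector_mult_def using True by (auto simp: Xij intro!: sum.cong)
    also have "\<dots> = (\<Sum>j\<in>S. ((if i = j then a else 0) + b) * x $ j)"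
      by (simp add: sum.If_cases)
    also have "\<dots> = (\<Sum>j\<in>S. (if i = j then a * x $ j else 0)) + (\<Sum>j\<in>S. b * x $ j)"
      by (subst sum.distrib[symmetric]) (auto intro!: sum.cong simp: algebra_simps)
    also have "\<dots> = a * x $ i + b * sum (\<lambda>j. x $ j) S"
      using True by (simp add: sum_distrib_left)
    finally show ?thesis using True by simp
  next
    case False
    then show ?thesis unfolding matrix_vector_mult_def by (simp add: Xij)
  qed
  have "X \<in> Q_feasible t"
    unfolding Q_feasible_def
  proof (intro CollectI conjI allI)
    show sym: "transpose X = X" unfolding transpose_def by (simp add: vec_eq_iff Xij)
    show "psd X" unfolding psd_def
    proof (intro conjI allI sym)
      fix x :: "real^'n"
      have "x \<bullet> (X *v x) = (\<Sum>i\<in>UNIV. if i \<in> S then x $ i * (a * x $ i + b * sum (\<lambda>j. x $ j) S) else 0)"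
        unfolding inner_vec_def by (simp add: Xv if_distrib cong: if_cong)
      also have "\<dots> = (\<Sum>i\<in>S. x $ i * (a * x $ i + b * sum (\<lambda>j. x $ j) S))"
        by (simp add: sum.If_cases)
      also have "\<dots> = a * (\<Sum>i\<in>S. (x $ i)^2) + b * (sum (\<lambda>j. x $ j) S)^2"
        by (simp add: algebra_simps sum.distrib sum_distrib_left power2_eq_square sum_distrib_right)
      also have "\<dots> \<ge> 0" using a0 b0 by (intro add_nonneg_nonneg mult_nonneg_nonneg sum_nonneg) auto
      finally show "0 \<le> x \<bullet> (X *v x)" .
    qed
    show "0 \<le> X $ i $ j" for i j using a0 b0 by (simp add: Xij)
    have "trace X = (\<Sum>i\<in>UNIV. if i \<in> S then a + b else 0)" unfolding trace_def by (auto simp: Xij intro!: sum.cong)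
    also have "\<dots> = k * (a + b)" by (simp add: sum.If_cases k_def)
    also have "\<dots> = t" using ab kpos by simp
    finally show "trace X = t" .
    show "X *v (\<chi> i. 1) = t *\<^sub>R diag_vec X"
      by (simp add: vec_eq_iff Xv diag_vec_def Xij abk[unfolded k_def])
  qed
  have f0: "frob (adj_matrix E) X = 0"
    unfolding frob_def trace_def matrix_matrix_mult_def adj_matrix_def transpose_def
    using st unfolding stable_set_def by (auto simp: Xij intro!: sum.neutral)
  let ?V = "(\<lambda>X. frob (adj_matrix E) X / 2) ` Q_feasible t"
  have hb: "bdd_below ?V" unfolding bdd_below_def Q_feasible_def
    by (rule exI[of _ 0]) (auto intro!: frob_nonneg)
  have h0: "0 \<in> ?V" using \<open>X \<in> Q_feasible t\<close> f0 by force
  have "Inf ?V \<le> 0" by (rule cInf_lower[OF h0 hb])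
  thus ?thesis unfolding S_val_def .
qed

theorem mainTheorem14:
  fixes E :: "'n::finite \<Rightarrow> 'n \<Rightarrow> bool" and t :: real
  assumes "simple_graph E"
    and "1 \<le> t" and "t \<le> real CARD('n)"
    and "S_val E t > 0"
  shows "int (stability_number E) \<le> \<lfloor>t\<rfloor>"
proof (rule ccontr)
  assume c: "\<not> ?thesis"
  have fin: "finite (card ` {S. stable_set E S})" by simp
  have ne: "card ` {S. stable_set E S} \<noteq> {}" using stable_set_def by auto
  obtain S where st: "stable_set E S" and cS: "card S = stability_number E"
    using Max_in[OF fin ne] unfolding stability_number_def by auto
  have "real (card S) > t" using c cS by linarith
  moreover have "2 \<le> card S" using c cS assms(2) by linarith
  ultimately have "S_val E t \<le> 0" using mainTheorem14_aux[OF assms(2) st] by simp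
  thus False using assms(4) by simp
qed

end
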